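(* Let $a,b>0$, $\chi_1,\chi_2\ge0$, $\lambda_1,\lambda_2,\mu_1,\mu_2>0$ with $b+\chi_2\mu_2>\chi_1\mu_1+M$. Let $0<\mu<\min\{1,\sqrt{\lambda_1/a},\sqrt{\lambda_2/a}\}$, $\tilde\mu\in(\mu,\min\{1,2\mu,\sqrt{\lambda_1/a},\sqrt{\lambda_2/a}\})$, $d>1$, and $u\in\mathcal E_\mu$. Then for every $x\in\mathbb R$, writing $\Phi=(\chi_2\lambda_2V_2-\chi_1\lambda_1V_1)(x;u)$, $\sigma=\chi_2\mu_2\lambda_2-\chi_1\mu_1\lambda_1$, $\varphi=\varphi_\mu(x)$, $$\Phi\le\min\Big\{(\sigma)_+\min\{\tfrac{C_0}{\lambda_2},\tfrac{\varphi}{\lambda_2-a\mu^2}\}+\chi_1\mu_1\lambda_1\min\{\tfrac{C_0(\lambda_1-\lambda_2)_+}{\lambda_1\lambda_2},\tfrac{\varphi(\lambda_1-\lambda_2)_+}{(\lambda_1-a\mu^2)(\lambda_2-a\mu^2)}\},\ (\sigma)_+\min\{\tfrac{C_0}{\lambda_1},\tfrac{\varphi}{\lambda_1-a\mu^2}\}+\chi_2\mu_2\lambda_2\min\{\tfrac{C_0(\lambda_1-\lambda_2)_+}{\lambda_1\lambda_2},\tfrac{\varphi(\lambda_1-\lambda_2)_+}{(\lambda_1-a\mu^2)(\lambda_2-a\mu^2)}\}\Big\}$$ and $$\Phi\ge\max\Big\{-(\sigma)_-\min\{\tfrac{C_0}{\lambda_2},\tfrac{\varphi}{\lambda_2-a\mu^2}\}-\chi_1\mu_1\lambda_1\min\{\tfrac{C_0(\lambda_1-\lambda_2)_-}{\lambda_1\lambda_2},\tfrac{\varphi(\lambda_1-\lambda_2)_-}{(\lambda_1-a\mu^2)(\lambda_2-a\mu^2)}\},\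 -(\sigma)_-\min\{\tfrac{C_0}{\lambda_1},\tfrac{\varphi}{\lambda_1-a\mu^2}\}-\chi_2\mu_2\lambda_2\min\{\tfrac{C_0(\lambda_1-\lambda_2)_-}{\lambda_1\lambda_2},\tfrac{\varphi(\lambda_1-\lambda_2)_-}{(\lambda_1-a\mu^2)(\lambda_2-a\mu^2)}\}\Big\}.$$
   Context: $(r)_+=\max\{r,0\}$, $(r)_-=\max\{-r,0\}$. $M=\min\{\frac{(\chi_2\mu_2\lambda_2-\chi_1\mu_1\lambda_1)_++\chi_1\mu_1(\lambda_1-\lambda_2)_+}{\lambda_2},\frac{\chi_2\mu_2(\lambda_1-\lambda_2)_++(\chi_2\mu_2\lambda_2-\chi_1\mu_1\lambda_1)_+}{\lambda_1}\}$, $C_0=\frac{a}{b+\chi_2\mu_2-\chi_1\mu_1-M}$, $\varphi_\mu(x)=e^{-\sqrt a\mu x}$, $U^+_\mu=\min\{C_0,\varphi_\mu\}$, $U^-_\mu=\max\{0,\varphi_\mu-d\varphi_{\tilde\mu}\}$, $\mathcal E_\mu=\{u\in C^b_{\rm unif}(\mathbb R): U^-_\mu\le u\le U^+_\mu\}$ where $C^b_{\rm unif}(\mathbb R)$ is the space of bounded uniformly continuous functions. For $i=1,2$, $V_i(x;u)=\mu_i\int_0^\infty\int_{\mathbb R}\frac{e^{-\lambda_i s}}{\sqrt{4\pi s}}e^{-\frac{|x-z|^2}{4s}}u(z)\,dz\,ds$. *)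

theory Defs
  imports "HOL-Analysis.Analysis"
begin

definition ppart :: "real \<Rightarrow> real" where "ppart r = max r 0"
definition npart :: "real \<Rightarrow> real" where "npart r = max (- r) 0"

definition Mconst :: "real \<Rightarrow> real \<Rightarrow> real \<Rightarrow> real \<Rightarrow> real \<Rightarrow> real \<Rightarrow> real" where
  "Mconst chi1 chi2 mu1 mu2 lam1 lam2 =
     min ((ppart (chi2*mu2*lam2 - chi1*mu1*lam1) + chi1*mu1*ppart (lam1 - lam2)) / lam2)
         ((chi2*mu2*ppart (lam1 - lam2) + ppart (chi2*mu2*lam2 - chi1*mu1*lam1)) / lam1)"

definition C0 :: "real \<Rightarrow> real \<Rightarrow> real \<Rightarrow> real \<Rightarrow> real \<Rightarrow> real \<Rightarrow> real \<Rightarrow> real \<Rightarrow> real" where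
  "C0 a b chi1 chi2 mu1 mu2 lam1 lam2 =
     a / (b + chi2*mu2 - chi1*mu1 - Mconst chi1 chi2 mu1 mu2 lam1 lam2)"

definition phi :: "real \<Rightarrow> real \<Rightarrow> real \<Rightarrow> real" where
  "phi a mu x = exp (- sqrt a * mu * x)"

definition Uplus :: "real \<Rightarrow> real \<Rightarrow> real \<Rightarrow> real \<Rightarrow> real" where
  "Uplus C a mu x = min C (phi a mu x)"

definition Uminus :: "real \<Rightarrow> real \<Rightarrow> real \<Rightarrow> real \<Rightarrow> real \<Rightarrow> real" where
  "Uminus a mu mu' d x = max 0 (phi a mu x - d * phi a mu' x)"

definition Cb_unif :: "(real \<Rightarrow> real) set" where
  "Cb_unif = {u. bounded (range u) \<and> uniformly_continuous_on UNIV u}"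

text \<open>The set E_mu; C is the constant C0, mu' is tilde mu.\<close>
definition Ecal :: "real \<Rightarrow> real \<Rightarrow> real \<Rightarrow> real \<Rightarrow> real \<Rightarrow> (real \<Rightarrow> real) set" where
  "Ecal C a mu mu' d = {u \<in> Cb_unif. \<forall>x. Uminus a mu mu' d x \<le> u x \<and> u x \<le> Uplus C a mu x}"

definition Vop :: "real \<Rightarrow> real \<Rightarrow> (real \<Rightarrow> real) \<Rightarrow> real \<Rightarrow> real" where
  "Vop lam m u x = m * (LINT s:{0<..}|lborel.
      (LINT z|lborel. exp (- lam * s) / sqrt (4 * pi * s) * exp (- (\<bar>x - z\<bar>^2) / (4 * s)) * u z))"

end

theory Submission
  imports Defs "HOL-Probability.Distributions" "HOL-Probability.Sinc_Integral"
begin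


lemma exp_int:
  fixes c :: real assumes "0 < c"
  shows "set_integrable lborel {0<..} (\<lambda>s. exp (-(s * c)))"
    and "(LINT s:{0<..}|lborel. exp (-(s * c))) = 1/c"
  using integrable_I0i_exp_mscale[OF assms] LBINT_I0i_exp_mscale[OF assms]
  by (simp_all add: interval_lebesgue_integral_0_infty)

lemma absA:
  fixes g :: "real \<Rightarrow> real" and C PP qq l :: real
  assumes gm[measurable]: "g \<in> borel_measurable borel"
    and g0: "\<And>s. 0 < s \<Longrightarrow> 0 \<le> g s" and gC: "\<And>s. 0 < s \<Longrightarrow> g s \<le> C"
    and gP: "\<And>s. 0 < s \<Longrightarrow> g s \<le> PP * exp (qq * s)"
    and l: "0 < l" "qq < l"
  shows "set_integrable lborel {0<..} (\<lambda>s. exp (-l* s) * g s)"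
    and "0 \<le> (LINT s:{0<..}|lborel. exp (-l* s) * g s)"
    and "(LINT s:{0<..}|lborel. exp (-l* s) * g s) \<le> C / l"
    and "(LINT s:{0<..}|lborel. exp (-l* s) * g s) \<le> PP / (l - qq)"
proof -
  have iC: "set_integrable lborel {0<..} (\<lambda>s. C * exp (-(s * l)))"
    using exp_int(1)[OF l(1)] by auto
  have iP: "set_integrable lborel {0<..} (\<lambda>s. PP * exp (-(s * (l-qq))))"
    using exp_int(1)[of "l-qq"] l by auto
  show I: "set_integrable lborel {0<..} (\<lambda>s. exp (-l* s) * g s)"
    unfolding set_integrable_def
  proof (rule Bochner_Integration.integrable_bound[where f="\<lambda>s. indicator {0<..} s *\<^sub>R (C * exp (-(s * l)))"])
    show "integrable lborel (\<lambda>s. indicator {0<..} s *\<^sub>R (C * exp (-(s * l))))"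
      using iC unfolding set_integrable_def .
    show "(\<lambda>s. indicator {0<..} s *\<^sub>R (exp (-l* s) * g s)) \<in> borel_measurable lborel"
      by measurable
    show "AE x in lborel. norm (indicator {0<..} x *\<^sub>R (exp (-l*x) * g x))
        \<le> norm (indicator {0<..} x *\<^sub>R (C * exp (-(x*l))))"
    proof (rule AE_I2)
      fix x :: real
      show "norm (indicator {0<..} x *\<^sub>R (exp (-l*x) * g x))
        \<le> norm (indicator {0<..} x *\<^sub>R (C * exp (-(x*l))))"
      proof (cases "0 < x")
        case True
        then have "0 \<le> g x" "g x \<le> C" using g0 gC by auto
        then show ?thesis using True by (simp add: abs_mult mult.commute mult_left_mono)
      qed simp
    qed
  qed
  show "0 \<le> (LINT s:{0<..}|lborel. exp (-l* s) * g s)"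
    unfolding set_lebesgue_integral_def
    by (rule Bochner_Integration.integral_nonneg) (auto simp: indicator_def g0)
  have "(LINT s:{0<..}|lborel. exp (-l* s) * g s) \<le> (LINT s:{0<..}|lborel. C * exp (-(s * l)))"
    using I iC by (rule set_integral_mono) (auto simp: gC mult.commute mult_left_mono)
  also have "\<dots> = C / l" using exp_int(2)[OF l(1)] by simp
  finally show "(LINT s:{0<..}|lborel. exp (-l* s) * g s) \<le> C / l" .
  have "(LINT s:{0<..}|lborel. exp (-l* s) * g s) \<le> (LINT s:{0<..}|lborel. PP * exp (-(s * (l-qq))))"
    using I iP
  proof (rule set_integral_mono)
    fix s :: real assume "s \<in> {0<..}"
    then have "exp (-l* s) * g s \<le> exp (-l* s) * (PP * exp (qq * s))" using gP by auto
    also have "\<dots> = PP * exp (-(s * (l-qq)))"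
      by (simp add: algebra_simps flip: exp_add)
    finally show "exp (-l* s) * g s \<le> PP * exp (-(s * (l-qq)))" .
  qed
  also have "\<dots> = PP / (l - qq)" using exp_int(2)[of "l-qq"] l by simp
  finally show "(LINT s:{0<..}|lborel. exp (-l* s) * g s) \<le> PP / (l - qq)" .
qed


lemma absB:
  fixes g :: "real \<Rightarrow> real" and C PP qq l1 l2 :: real
  assumes gm[measurable]: "g \<in> borel_measurable borel"
    and g0: "\<And>s. 0 < s \<Longrightarrow> 0 \<le> g s" and gC: "\<And>s. 0 < s \<Longrightarrow> g s \<le> C"
    and gP: "\<And>s. 0 < s \<Longrightarrow> g s \<le> PP * exp (qq * s)"
    and l: "0 < l2" "qq < l2" "l2 \<le> l1"
  shows "0 \<le> (LINT s:{0<..}|lborel. exp (-l2 * s) * g s) - (LINT s:{0<..}|lborel. exp (-l1 * s) * g s)"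
    and "(LINT s:{0<..}|lborel. exp (-l2 * s) * g s) - (LINT s:{0<..}|lborel. exp (-l1 * s) * g s) \<le> C * (1/l2 - 1/l1)"
    and "(LINT s:{0<..}|lborel. exp (-l2 * s) * g s) - (LINT s:{0<..}|lborel. exp (-l1 * s) * g s) \<le> PP * (1/(l2-qq) - 1/(l1-qq))"
proof -
  have I2: "set_integrable lborel {0<..} (\<lambda>s. exp (-l2 * s) * g s)"
    using absA(1)[OF gm g0 gC gP, of l2] l by auto
  have I1: "set_integrable lborel {0<..} (\<lambda>s. exp (-l1 * s) * g s)"
    using absA(1)[OF gm g0 gC gP, of l1] l by auto
  have eq: "(LINT s:{0<..}|lborel. exp (-l2 * s) * g s) - (LINT s:{0<..}|lborel. exp (-l1 * s) * g s)
     = (LINT s:{0<..}|lborel. exp (-l2 * s) * g s - exp (-l1 * s) * g s)"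
    using set_integral_diff(2)[OF I2 I1] by simp
  have ID: "set_integrable lborel {0<..} (\<lambda>s. exp (-l2 * s) * g s - exp (-l1 * s) * g s)"
    using set_integral_diff(1)[OF I2 I1] .
  have ee: "exp (-l1 * s) \<le> exp (-l2 * s)" if "0 < s" for s
    using l that by (simp add: mult_right_mono)
  show "0 \<le> (LINT s:{0<..}|lborel. exp (-l2 * s) * g s) - (LINT s:{0<..}|lborel. exp (-l1 * s) * g s)"
  proof -
    have "0 \<le> (LINT s:{0<..}|lborel. exp (-l2 * s) * g s - exp (-l1 * s) * g s)"
      unfolding set_lebesgue_integral_def
      by (rule Bochner_Integration.integral_nonneg)
         (auto simp: indicator_def simp flip: left_diff_distrib
               intro!: mult_nonneg_nonneg g0 ee[simplified] l)
    then show ?thesis using eq by simp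
  qed
  have iC: "set_integrable lborel {0<..} (\<lambda>s. C * exp (-(s * l2)) - C * exp (-(s * l1)))"
    using exp_int(1)[of l1] exp_int(1)[of l2] l by auto
  have iP: "set_integrable lborel {0<..} (\<lambda>s. PP * exp (-(s * (l2-qq))) - PP * exp (-(s * (l1-qq))))"
    using exp_int(1)[of "l1-qq"] exp_int(1)[of "l2-qq"] l by auto
  have "(LINT s:{0<..}|lborel. exp (-l2 * s) * g s - exp (-l1 * s) * g s)
      \<le> (LINT s:{0<..}|lborel. C * exp (-(s * l2)) - C * exp (-(s * l1)))"
    using ID iC
  proof (rule set_integral_mono)
    fix s :: real assume "s \<in> {0<..}"
    then have s: "0 < s" by simp
    have "exp (-l2 * s) * g s - exp (-l1 * s) * g s = (exp (-l2 * s) - exp (-l1 * s)) * g s"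
      by (simp add: algebra_simps)
    also have "\<dots> \<le> (exp (-l2 * s) - exp (-l1 * s)) * C"
      using ee[OF s] gC[OF s] by (intro mult_left_mono) auto
    finally show "exp (-l2 * s) * g s - exp (-l1 * s) * g s \<le> C * exp (-(s * l2)) - C * exp (-(s * l1))"
      by (simp add: algebra_simps)
  qed
  also have "\<dots> = C * (1/l2 - 1/l1)"
    using set_integral_diff(2)[of lborel "{0<..}" "\<lambda>s. C * exp (-(s * l2))" "\<lambda>s. C * exp (-(s * l1))"]
      exp_int[of l1] exp_int[of l2] l by (simp add: algebra_simps)
  finally show "(LINT s:{0<..}|lborel. exp (-l2 * s) * g s) - (LINT s:{0<..}|lborel. exp (-l1 * s) * g s) \<le> C * (1/l2 - 1/l1)"
    using eq by simp
  have "(LINT s:{0<..}|lborel. exp (-l2 * s) * g s - exp (-l1 * s) * g s)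
      \<le> (LINT s:{0<..}|lborel. PP * exp (-(s * (l2-qq))) - PP * exp (-(s * (l1-qq))))"
    using ID iP
  proof (rule set_integral_mono)
    fix s :: real assume "s \<in> {0<..}"
    then have s: "0 < s" by simp
    have "exp (-l2 * s) * g s - exp (-l1 * s) * g s = (exp (-l2 * s) - exp (-l1 * s)) * g s"
      by (simp add: algebra_simps)
    also have "\<dots> \<le> (exp (-l2 * s) - exp (-l1 * s)) * (PP * exp (qq * s))"
      using ee[OF s] gP[OF s] by (intro mult_left_mono) auto
    also have "\<dots> = PP * exp (-(s * (l2-qq))) - PP * exp (-(s * (l1-qq)))"
      by (simp add: algebra_simps flip: exp_add)
    finally show "exp (-l2 * s) * g s - exp (-l1 * s) * g s \<le> PP * exp (-(s * (l2-qq))) - PP * exp (-(s * (l1-qq)))" .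
  qed
  also have "\<dots> = PP * (1/(l2-qq) - 1/(l1-qq))"
    using set_integral_diff(2)[of lborel "{0<..}" "\<lambda>s. PP * exp (-(s * (l2-qq)))" "\<lambda>s. PP * exp (-(s * (l1-qq)))"]
      exp_int[of "l1-qq"] exp_int[of "l2-qq"] l by (simp add: algebra_simps)
  finally show "(LINT s:{0<..}|lborel. exp (-l2 * s) * g s) - (LINT s:{0<..}|lborel. exp (-l1 * s) * g s) \<le> PP * (1/(l2-qq) - 1/(l1-qq))"
    using eq by simp
qed


lemma kern_nd:
  fixes s x z :: real assumes "0 < s"
  shows "exp (- (\<bar>x - z\<bar>^2) / (4 * s)) / sqrt (4 * pi * s) = normal_density x (sqrt (2 * s)) z"
proof -
  have "(sqrt (2 * s))\<^sup>2 = 2 * s" using assms by simp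
  then show ?thesis unfolding normal_density_def
    by (simp add: power2_abs power2_commute[of x z] mult.assoc)
qed

lemma kern_tilt:
  fixes s x z c :: real assumes "0 < s"
  shows "normal_density x (sqrt (2 * s)) z * exp (- c * z)
       = exp (- c * x + c^2 * s) * normal_density (x - 2 * c * s) (sqrt (2 * s)) z"
proof -
  have sq: "(sqrt (2 * s))\<^sup>2 = 2 * s" using assms by simp
  have "- (z - x)\<^sup>2 / (2 * (2 * s)) + - c * z = - c * x + c^2 * s + - (z - (x - 2 * c * s))\<^sup>2 / (2 * (2 * s))"
    using assms by (simp add: field_simps power2_eq_square)
  then have "exp (- (z - x)\<^sup>2 / (2 * (2 * s))) * exp (- c * z)
      = exp (- c * x + c^2 * s) * exp (- (z - (x - 2 * c * s))\<^sup>2 / (2 * (2 * s)))"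
    by (simp flip: exp_add)
  then show ?thesis unfolding normal_density_def sq by (simp add: ac_simps)
qed

lemma gfacts:
  fixes u :: "real \<Rightarrow> real" and x C c :: real
  assumes um[measurable]: "u \<in> borel_measurable borel"
    and u0: "\<And>z. 0 \<le> u z" and uC: "\<And>z. u z \<le> C" and uP: "\<And>z. u z \<le> exp (- c * z)"
  defines "g \<equiv> \<lambda>s. LINT z|lborel. exp (- (\<bar>x - z\<bar>^2) / (4 * s)) / sqrt (4 * pi * s) * u z"
  shows "g \<in> borel_measurable borel"
    and "\<And>s. 0 < s \<Longrightarrow> 0 \<le> g s"
    and "\<And>s. 0 < s \<Longrightarrow> g s \<le> C"
    and "\<And>s. 0 < s \<Longrightarrow> g s \<le> exp (- c * x) * exp (c^2 * s)"
proof -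
  show "g \<in> borel_measurable borel" unfolding g_def by measurable
  fix s :: real assume s: "0 < s"
  have sp: "0 < sqrt (2 * s)" using s by simp
  have gs: "g s = LINT z|lborel. normal_density x (sqrt (2 * s)) z * u z"
    unfolding g_def using kern_nd[OF s] by simp
  have Iu: "integrable lborel (\<lambda>z. normal_density x (sqrt (2 * s)) z * u z)"
  proof (rule Bochner_Integration.integrable_bound[where f="\<lambda>z. C * normal_density x (sqrt (2 * s)) z"])
    show "integrable lborel (\<lambda>z. C * normal_density x (sqrt (2 * s)) z)" using integrable_normal_density[OF sp] by simp
    show "(\<lambda>z. normal_density x (sqrt (2 * s)) z * u z) \<in> borel_measurable lborel" by measurable
    show "AE z in lborel. norm (normal_density x (sqrt (2 * s)) z * u z) \<le> norm (C * normal_density x (sqrt (2 * s)) z)"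
    proof (intro AE_I2)
      fix z
      have "0 \<le> C" using order_trans[OF u0 uC] .
      moreover have "normal_density x (sqrt (2 * s)) z * u z \<le> normal_density x (sqrt (2 * s)) z * C"
        by (intro mult_left_mono uC) simp
      ultimately show "norm (normal_density x (sqrt (2 * s)) z * u z) \<le> norm (C * normal_density x (sqrt (2 * s)) z)"
        using u0[of z] by (simp add: abs_mult abs_of_nonneg mult.commute)
    qed
  qed
  show "0 \<le> g s" unfolding gs
    by (rule Bochner_Integration.integral_nonneg) (simp add: u0)
  have "g s \<le> (LINT z|lborel. C * normal_density x (sqrt (2 * s)) z)" unfolding gs
  proof (rule integral_mono[OF Iu])
    show "integrable lborel (\<lambda>z. C * normal_density x (sqrt (2 * s)) z)"
      using integrable_normal_density[OF sp] by simp
    fix z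
    show "normal_density x (sqrt (2 * s)) z * u z \<le> C * normal_density x (sqrt (2 * s)) z"
      using mult_left_mono[OF uC[of z] normal_density_nonneg] by (simp add: mult.commute)
  qed
  then show "g s \<le> C" using integral_normal_density[OF sp] by simp
  have "g s \<le> (LINT z|lborel. exp (- c * x + c^2 * s) * normal_density (x - 2 * c * s) (sqrt (2 * s)) z)"
    unfolding gs
  proof (rule integral_mono[OF Iu])
    show "integrable lborel (\<lambda>z. exp (- c * x + c^2 * s) * normal_density (x - 2 * c * s) (sqrt (2 * s)) z)"
      using integrable_normal_density[OF sp] by simp
    fix z :: real
    have "normal_density x (sqrt (2 * s)) z * u z \<le> normal_density x (sqrt (2 * s)) z * exp (- c * z)"
      by (intro mult_left_mono uP) simp
    then show "normal_density x (sqrt (2 * s)) z * u z \<le> exp (- c * x + c^2 * s) * normal_density (x - 2 * c * s) (sqrt (2 * s)) z"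
      using kern_tilt[OF s, of x z c] by simp
  qed
  then show "g s \<le> exp (- c * x) * exp (c^2 * s)" using integral_normal_density[OF sp] by (simp add: exp_add[symmetric] algebra_simps)
qed



lemma h1:
  fixes A X Y sg :: real
  assumes "0 \<le> A" "A \<le> X" "A \<le> Y"
  shows "sg * A \<le> ppart sg * min X Y" "- npart sg * min X Y \<le> sg * A"
proof -
  have m: "0 \<le> A" "A \<le> min X Y" using assms by auto
  show "sg * A \<le> ppart sg * min X Y"
  proof (cases "sg \<ge> 0")
    case True then show ?thesis using m by (simp add: ppart_def mult_left_mono)
  next
    case False then show ?thesis using m
      by (simp add: ppart_def mult_nonneg_nonpos2 order_trans[OF m(1) m(2)] mult_nonpos_nonneg)
  qed
  show "- npart sg * min X Y \<le> sg * A"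
  proof (cases "sg \<ge> 0")
    case True then show ?thesis using m by (simp add: npart_def)
  next
    case False
    then have "sg * min X Y \<le> sg * A" using m by (intro mult_left_mono_neg) auto
    then show ?thesis using False by (simp add: npart_def)
  qed
qed

lemma h2:
  fixes k B C ph l1 l2 q :: real
  assumes k: "0 \<le> k" and l: "q < l1" "q < l2" "0 < l1" "0 < l2"
    and c1: "l2 \<le> l1 \<Longrightarrow> 0 \<le> B \<and> B \<le> C * (1/l2 - 1/l1) \<and> B \<le> ph * (1/(l2-q) - 1/(l1-q))"
    and c2: "l1 \<le> l2 \<Longrightarrow> 0 \<le> -B \<and> -B \<le> C * (1/l1 - 1/l2) \<and> -B \<le> ph * (1/(l1-q) - 1/(l2-q))"
  shows "k * B \<le> k * min (C * ppart (l1 - l2) / (l1*l2)) (ph * ppart (l1 - l2) / ((l1 - q) * (l2 - q)))"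
    and "- k * min (C * npart (l1 - l2) / (l1*l2)) (ph * npart (l1 - l2) / ((l1 - q) * (l2 - q))) \<le> k * B"
proof -
  have e1: "C * (1/l2 - 1/l1) = C * (l1 - l2) / (l1*l2)" using l by (simp add: field_simps)
  have e2: "ph * (1/(l2-q) - 1/(l1-q)) = ph * (l1 - l2) / ((l1 - q) * (l2 - q))" using l by (simp add: field_simps)
  have e3: "C * (1/l1 - 1/l2) = C * (l2 - l1) / (l1*l2)" using l by (simp add: field_simps)
  have e4: "ph * (1/(l1-q) - 1/(l2-q)) = ph * (l2 - l1) / ((l1 - q) * (l2 - q))" using l by (simp add: field_simps)
  show "k * B \<le> k * min (C * ppart (l1 - l2) / (l1*l2)) (ph * ppart (l1 - l2) / ((l1 - q) * (l2 - q)))"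
  proof (cases "l2 \<le> l1")
    case True
    then have "B \<le> min (C * ppart (l1 - l2) / (l1*l2)) (ph * ppart (l1 - l2) / ((l1 - q) * (l2 - q)))"
      using c1 e1 e2 by (simp add: ppart_def)
    then show ?thesis using k by (rule mult_left_mono)
  next
    case False
    then have "B \<le> 0" using c2 by auto
    then show ?thesis using False k by (simp add: ppart_def mult_nonneg_nonpos)
  qed
  show "- k * min (C * npart (l1 - l2) / (l1*l2)) (ph * npart (l1 - l2) / ((l1 - q) * (l2 - q))) \<le> k * B"
  proof (cases "l1 \<le> l2")
    case True
    then have "- B \<le> min (C * npart (l1 - l2) / (l1*l2)) (ph * npart (l1 - l2) / ((l1 - q) * (l2 - q)))"
      using c2 e3 e4 by (simp add: npart_def)
    then have "k * (- B) \<le> k * min (C * npart (l1 - l2) / (l1*l2)) (ph * npart (l1 - l2) / ((l1 - q) * (l2 - q)))"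
      using k by (rule mult_left_mono)
    then show ?thesis by simp
  next
    case False
    then have "0 \<le> B" using c1 by auto
    then show ?thesis using False k by (simp add: npart_def)
  qed
qed

theorem lemma2p2:
  fixes a b chi1 chi2 lam1 lam2 mu1 mu2 mu mu' d :: real and u :: "real \<Rightarrow> real"
  assumes "a > 0" "b > 0" "chi1 \<ge> 0" "chi2 \<ge> 0"
    and "lam1 > 0" "lam2 > 0" "mu1 > 0" "mu2 > 0"
    and "b + chi2*mu2 > chi1*mu1 + Mconst chi1 chi2 mu1 mu2 lam1 lam2"
    and "0 < mu" "mu < min 1 (min (sqrt (lam1/a)) (sqrt (lam2/a)))"
    and "mu < mu'" "mu' < min (min 1 (2*mu)) (min (sqrt (lam1/a)) (sqrt (lam2/a)))"
    and "d > 1"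
    and "u \<in> Ecal (C0 a b chi1 chi2 mu1 mu2 lam1 lam2) a mu mu' d"
  shows "\<forall>x::real.
    (let Phi = chi2 * lam2 * Vop lam2 mu2 u x - chi1 * lam1 * Vop lam1 mu1 u x;
         sigma = chi2*mu2*lam2 - chi1*mu1*lam1;
         ph = phi a mu x;
         C = C0 a b chi1 chi2 mu1 mu2 lam1 lam2;
         D = (lam1 - a*mu^2) * (lam2 - a*mu^2)
     in Phi \<le> min
          (ppart sigma * min (C / lam2) (ph / (lam2 - a*mu^2))
             + chi1*mu1*lam1 * min (C * ppart (lam1 - lam2) / (lam1*lam2)) (ph * ppart (lam1 - lam2) / D))
          (ppart sigma * min (C / lam1) (ph / (lam1 - a*mu^2))
             + chi2*mu2*lam2 * min (C * ppart (lam1 - lam2) / (lam1*lam2)) (ph * ppart (lam1 - lam2) / D))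
      \<and> Phi \<ge> max
          (- npart sigma * min (C / lam2) (ph / (lam2 - a*mu^2))
             - chi1*mu1*lam1 * min (C * npart (lam1 - lam2) / (lam1*lam2)) (ph * npart (lam1 - lam2) / D))
          (- npart sigma * min (C / lam1) (ph / (lam1 - a*mu^2))
             - chi2*mu2*lam2 * min (C * npart (lam1 - lam2) / (lam1*lam2)) (ph * npart (lam1 - lam2) / D)))"
proof (intro allI)
  fix x :: real
  define C where "C = C0 a b chi1 chi2 mu1 mu2 lam1 lam2"
  define ph where "ph = phi a mu x"
  define c where "c = sqrt a * mu"
  define q where "q = a * mu^2"
  have cq: "c^2 = q" unfolding c_def q_def using assms(1) by (simp add: power_mult_distrib)
  have uE: "u \<in> Cb_unif" and uB: "\<And>z. Uminus a mu mu' d z \<le> u z \<and> u z \<le> Uplus C a mu z"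
    using assms(15) unfolding Ecal_def C_def by auto
  have um: "u \<in> borel_measurable borel"
    using uE unfolding Cb_unif_def
    by (intro borel_measurable_continuous_onI uniformly_continuous_imp_continuous) auto
  have u0: "\<And>z. 0 \<le> u z" using uB unfolding Uminus_def by (meson max.bounded_iff)
  have uC: "\<And>z. u z \<le> C" using uB unfolding Uplus_def by (meson min.bounded_iff)
  have uP: "\<And>z. u z \<le> exp (- c * z)" using uB unfolding Uplus_def phi_def c_def
    by (metis min.bounded_iff mult_minus_left)
  define g where "g \<equiv> \<lambda>s. LINT z|lborel. exp (- (\<bar>x - z\<bar>^2) / (4 * s)) / sqrt (4 * pi * s) * u z"
  note gf0 = gfacts[where x=x, OF um u0 uC uP]
  have gm: "g \<in> borel_measurable borel" unfolding g_def by (rule gf0(1))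
  have g0: "\<And>s. 0 < s \<Longrightarrow> 0 \<le> g s" unfolding g_def by (rule gf0(2))
  have gC: "\<And>s. 0 < s \<Longrightarrow> g s \<le> C" unfolding g_def by (rule gf0(3))
  have gP: "g s \<le> ph * exp (q * s)" if s: "0 < s" for s
  proof -
    have "g s \<le> exp (- c * x) * exp (c^2 * s)" unfolding g_def by (rule gf0(4)[OF s])
    moreover have "exp (- c * x) = ph" unfolding ph_def phi_def c_def by simp
    ultimately show ?thesis using cq by simp
  qed
  have gf: "g \<in> borel_measurable borel" "\<And>s. 0 < s \<Longrightarrow> 0 \<le> g s" "\<And>s. 0 < s \<Longrightarrow> g s \<le> C"
    using gm g0 gC by auto
  have lq: "q < lam1" "q < lam2"
  proof -
    have "mu^2 < (sqrt (lam1/a))^2" "mu^2 < (sqrt (lam2/a))^2"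
      using assms(10,11) by (intro power_strict_mono; simp)+
    then show "q < lam1" "q < lam2" unfolding q_def using assms(1,5,6) by (simp_all add: field_simps)
  qed
  define A where "A = (\<lambda>l. LINT s:{0<..}|lborel. exp (-l * s) * g s)"
  have V: "Vop l m u x = m * A l" for l m
  proof -
    have "(\<lambda>s. LINT z|lborel. exp (- l * s) / sqrt (4 * pi * s) * exp (- (\<bar>x - z\<bar>^2) / (4 * s)) * u z)
        = (\<lambda>s. exp (- l * s) * g s)"
    proof
      fix s
      have "(LINT z|lborel. exp (- l * s) / sqrt (4 * pi * s) * exp (- (\<bar>x - z\<bar>^2) / (4 * s)) * u z)
         = (LINT z|lborel. exp (- l * s) * (exp (- (\<bar>x - z\<bar>^2) / (4 * s)) / sqrt (4 * pi * s) * u z))"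
        by (rule Bochner_Integration.integral_cong) auto
      also have "\<dots> = exp (- l * s) * g s" unfolding g_def by (rule integral_mult_right_zero)
      finally show "(LINT z|lborel. exp (- l * s) / sqrt (4 * pi * s) * exp (- (\<bar>x - z\<bar>^2) / (4 * s)) * u z) = exp (- l * s) * g s" .
    qed
    then show ?thesis unfolding Vop_def A_def by simp
  qed
  have a1: "True" "0 \<le> A lam1" "A lam1 \<le> C / lam1" "A lam1 \<le> ph / (lam1 - q)"
    using absA[OF gf(1) gf(2) gf(3) gP assms(5) lq(1)] unfolding A_def by auto
  have a2: "True" "0 \<le> A lam2" "A lam2 \<le> C / lam2" "A lam2 \<le> ph / (lam2 - q)"
    using absA[OF gf(1) gf(2) gf(3) gP assms(6) lq(2)] unfolding A_def by auto
  have B1: "l2' \<le> l1' \<Longrightarrow> 0 \<le> A l2' - A l1' \<and> A l2' - A l1' \<le> C * (1/l2' - 1/l1') \<and> A l2' - A l1' \<le> ph * (1/(l2'-q) - 1/(l1'-q))"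
    if "0 < l2'" "q < l2'" for l1' l2'
    using absB[OF gf(1) gf(2) gf(3) gP that, of l1'] unfolding A_def by auto
  have c1: "lam2 \<le> lam1 \<Longrightarrow> 0 \<le> A lam2 - A lam1 \<and> A lam2 - A lam1 \<le> C * (1/lam2 - 1/lam1) \<and> A lam2 - A lam1 \<le> ph * (1/(lam2-q) - 1/(lam1-q))"
    using B1[OF assms(6) lq(2)] .
  have c2: "lam1 \<le> lam2 \<Longrightarrow> 0 \<le> -(A lam2 - A lam1) \<and> -(A lam2 - A lam1) \<le> C * (1/lam1 - 1/lam2) \<and> -(A lam2 - A lam1) \<le> ph * (1/(lam1-q) - 1/(lam2-q))"
    using B1[OF assms(5) lq(1), of lam2] by simp
  define sg where "sg = chi2*mu2*lam2 - chi1*mu1*lam1"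
  define Phi where "Phi = chi2 * lam2 * Vop lam2 mu2 u x - chi1 * lam1 * Vop lam1 mu1 u x"
  have P1: "Phi = sg * A lam2 + chi1*mu1*lam1 * (A lam2 - A lam1)"
    unfolding Phi_def V sg_def by (simp add: algebra_simps)
  have P2: "Phi = sg * A lam1 + chi2*mu2*lam2 * (A lam2 - A lam1)"
    unfolding Phi_def V sg_def by (simp add: algebra_simps)
  have k1: "0 \<le> chi1*mu1*lam1" and k2: "0 \<le> chi2*mu2*lam2" using assms(3-8) by auto
  note h2a = h2[OF k1 lq assms(5,6) c1 c2]
  note h2b = h2[OF k2 lq assms(5,6) c1 c2]
  note h1a = h1[of "A lam2" "C / lam2" "ph / (lam2 - q)" sg]
  note h1b = h1[of "A lam1" "C / lam1" "ph / (lam1 - q)" sg]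
  have up: "Phi \<le> min
          (ppart sg * min (C / lam2) (ph / (lam2 - q))
             + chi1*mu1*lam1 * min (C * ppart (lam1 - lam2) / (lam1*lam2)) (ph * ppart (lam1 - lam2) / ((lam1 - q) * (lam2 - q))))
          (ppart sg * min (C / lam1) (ph / (lam1 - q))
             + chi2*mu2*lam2 * min (C * ppart (lam1 - lam2) / (lam1*lam2)) (ph * ppart (lam1 - lam2) / ((lam1 - q) * (lam2 - q))))"
    using h1a(1) h1b(1) h2a(1) h2b(1) a1(2-4) a2(2-4) P1 P2 by simp
  have lo: "Phi \<ge> max
          (- npart sg * min (C / lam2) (ph / (lam2 - q))
             - chi1*mu1*lam1 * min (C * npart (lam1 - lam2) / (lam1*lam2)) (ph * npart (lam1 - lam2) / ((lam1 - q) * (lam2 - q))))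
          (- npart sg * min (C / lam1) (ph / (lam1 - q))
             - chi2*mu2*lam2 * min (C * npart (lam1 - lam2) / (lam1*lam2)) (ph * npart (lam1 - lam2) / ((lam1 - q) * (lam2 - q))))"
    using h1a(2) h1b(2) h2a(2) h2b(2) a1(2-4) a2(2-4) P1 P2 by simp
  show "let Phi = chi2 * lam2 * Vop lam2 mu2 u x - chi1 * lam1 * Vop lam1 mu1 u x;
         sigma = chi2*mu2*lam2 - chi1*mu1*lam1;
         ph = phi a mu x;
         C = C0 a b chi1 chi2 mu1 mu2 lam1 lam2;
         D = (lam1 - a*mu^2) * (lam2 - a*mu^2)
     in Phi \<le> min
          (ppart sigma * min (C / lam2) (ph / (lam2 - a*mu^2))
             + chi1*mu1*lam1 * min (C * ppart (lam1 - lam2) / (lam1*lam2)) (ph * ppart (lam1 - lam2) / D))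
          (ppart sigma * min (C / lam1) (ph / (lam1 - a*mu^2))
             + chi2*mu2*lam2 * min (C * ppart (lam1 - lam2) / (lam1*lam2)) (ph * ppart (lam1 - lam2) / D))
      \<and> Phi \<ge> max
          (- npart sigma * min (C / lam2) (ph / (lam2 - a*mu^2))
             - chi1*mu1*lam1 * min (C * npart (lam1 - lam2) / (lam1*lam2)) (ph * npart (lam1 - lam2) / D))
          (- npart sigma * min (C / lam1) (ph / (lam1 - a*mu^2))
             - chi2*mu2*lam2 * min (C * npart (lam1 - lam2) / (lam1*lam2)) (ph * npart (lam1 - lam2) / D))"
    unfolding Let_def using up lo unfolding Phi_def sg_def C_def ph_def q_def by simp
qed

end
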